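(* Let $p,p'\in[0,1]^N$ with $\|p-p'\|_0\le1$. If $\mathrm{FDP}[BH_q;p']\ne\mathrm{FDP}[BH_q;p]$, then $\tilde k'\ne\tilde k$.
   Context: $\mathcal N=\{1,\dots,N\}=\mathcal H_0\sqcup\mathcal H_1$ is a fixed partition of test indices into nulls and alternatives; $q\in(0,1)$. $\|p-p'\|_0$ is the number of indices $i$ with $p_i\ne p'_i$. For $x\in[0,1]^N$, its rejection count is $\tilde k(x)=\max\{i\in\{0,\dots,N\}:|\{j\in\mathcal N:0\le x_j<iq/N\}|=i\}$; the Benjamini–Hochberg procedure $BH_q$ rejects the tests $j$ with $x_j<\tilde k(x)q/N$, and $\mathrm{FDP}[BH_q;x]=|\{j\in\mathcal H_0:x_j<\tilde k(x)q/N\}|/\max(\tilde k(x),1)$. Write $\tilde k=\tilde k(p)$, $\tilde k'=\tilde k(p')$. *)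

theory Defs
  imports Complex_Main
begin

text \<open>Test indices are 1..N. A p-value vector is a function nat => real,
  of which only the values at indices 1..N matter.\<close>

definition l0dist :: "nat \<Rightarrow> (nat \<Rightarrow> real) \<Rightarrow> (nat \<Rightarrow> real) \<Rightarrow> nat" where
  "l0dist N p p' = card {i \<in> {1..N}. p i \<noteq> p' i}"

definition ktilde :: "nat \<Rightarrow> real \<Rightarrow> (nat \<Rightarrow> real) \<Rightarrow> nat" where
  "ktilde N q x = Max {i \<in> {0..N}.
     card {j \<in> {1..N}. 0 \<le> x j \<and> x j < real i * q / real N} = i}"

definition FDP_BH :: "nat \<Rightarrow> nat set \<Rightarrow> real \<Rightarrow> (nat \<Rightarrow> real) \<Rightarrow> real" where
  "FDP_BH N H0 q x =
     real (card {j \<in> H0. x j < real (ktilde N q x) * q / real N})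
     / real (max (ktilde N q x) 1)"

end

theory Submission
  imports Defs
begin

lemma ktilde_card:
  "card {j \<in> {1..N}. 0 \<le> x j \<and> x j < real (ktilde N q x) * q / real N} = ktilde N q x"
proof -
  let ?M = "{i \<in> {0..N}. card {j \<in> {1..N}. 0 \<le> x j \<and> x j < real i * q / real N} = i}"
  have "0 \<in> ?M" by auto
  moreover have "finite ?M" by auto
  ultimately have "Max ?M \<in> ?M" by (intro Max_in) auto
  then show ?thesis unfolding ktilde_def by simp
qed

lemma card_eq_set_eq:
  assumes fin: "finite A" "finite B" and cd: "card A = card B"
    and D: "card D \<le> 1" "finite D" and AB: "A - D = B - D"
  shows "A = B"
proof (rule ccontr)
  assume "A \<noteq> B"
  then obtain j where j: "(j \<in> A \<and> j \<notin> B) \<or> (j \<in> B \<and> j \<notin> A)" by blast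
  with AB have jD: "j \<in> D" by blast
  with D have Dj: "D = {j}"
    by (metis card_1_singletonE card_0_eq empty_iff le_Suc_eq One_nat_def le_zero_eq singletonD)
  show False
  proof (cases "j \<in> A")
    case True
    with j have "j \<notin> B" by blast
    then have "A = insert j B" using AB Dj True by blast
    then show False using cd fin \<open>j \<notin> B\<close> by simp
  next
    case False
    with j have "j \<in> B" by blast
    then have "B = insert j A" using AB Dj False by blast
    then show False using cd fin False by simp
  qed
qed

theorem lemma2:
  fixes N :: nat and H0 :: "nat set" and q :: real and p p' :: "nat \<Rightarrow> real"
  assumes "H0 \<subseteq> {1..N}"
    and "0 < q" and "q < 1"
    and "\<forall>i \<in> {1..N}. 0 \<le> p i \<and> p i \<le> 1"
    and "\<forall>i \<in> {1..N}. 0 \<le> p' i \<and> p' i \<le> 1"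
    and "l0dist N p p' \<le> 1"
    and "FDP_BH N H0 q p' \<noteq> FDP_BH N H0 q p"
  shows "ktilde N q p' \<noteq> ktilde N q p"
proof
  assume eq: "ktilde N q p' = ktilde N q p"
  define K where "K = ktilde N q p"
  define A where "A = {j \<in> {1..N}. 0 \<le> p j \<and> p j < real K * q / real N}"
  define B where "B = {j \<in> {1..N}. 0 \<le> p' j \<and> p' j < real K * q / real N}"
  define D where "D = {i \<in> {1..N}. p i \<noteq> p' i}"
  have cA: "card A = K" unfolding A_def K_def by (rule ktilde_card)
  have cB: "card B = K" unfolding B_def K_def using ktilde_card[of N p' q] eq by simp
  have "card D \<le> 1" using assms(6) unfolding l0dist_def D_def .
  moreover have "A - D = B - D" unfolding A_def B_def D_def by auto
  ultimately have AB: "A = B"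
    using card_eq_set_eq[of A B D] cA cB unfolding A_def B_def D_def by auto
  have "{j \<in> H0. p j < real K * q / real N} = H0 \<inter> A"
    using assms(1,4) unfolding A_def by auto
  moreover have "{j \<in> H0. p' j < real K * q / real N} = H0 \<inter> B"
    using assms(1,5) unfolding B_def by auto
  ultimately have "FDP_BH N H0 q p' = FDP_BH N H0 q p"
    unfolding FDP_BH_def using eq AB K_def by simp
  with assms(7) show False by simp
qed

end
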